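(* For $\tau,t\in\mathbb{R}$ let $$\mu_0(\tau,t)=\int_{-\infty}^{\infty}\exp(-x^6+\tau x^4+tx^2)\,dx.$$ Then $$\mu_0(\tau,t)=\int_0^\infty s^{-1/2}\exp(-s^3+\tau s^2+ts)\,ds,$$ and $\varphi=\mu_0(\tau,t)$ satisfies $$\frac{\partial^3\varphi}{\partial t^3}-\tfrac23\tau\frac{\partial^2\varphi}{\partial t^2}-\tfrac13t\frac{\partial\varphi}{\partial t}-\tfrac16\varphi=0.$$ *)

theory Defs
  imports "HOL-Analysis.Analysis"
begin

definition mu0 :: "real \<Rightarrow> real \<Rightarrow> real" where
  "mu0 \<tau> t = integral\<^sup>L lborel (\<lambda>x. exp (- (x ^ 6) + \<tau> * x ^ 4 + t * x ^ 2))"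

end

theory Submission
  imports Defs "HOL-Probability.Distributions"
begin

definition EE :: "real \<Rightarrow> real \<Rightarrow> real \<Rightarrow> real" where
  "EE \<tau> t x = exp (- (x ^ 6) + \<tau> * x ^ 4 + t * x ^ 2)"

lemma poly_bound:
  fixes \<tau> c :: real
  shows "\<exists>M. \<forall>y\<ge>0. - (y^3) + \<tau> * y^2 + c * y \<le> M"
proof -
  define Y where "Y = \<bar>\<tau>\<bar> + \<bar>c\<bar> + 1"
  have Y1: "Y \<ge> 1" unfolding Y_def by simp
  show ?thesis
  proof (intro exI allI impI)
    fix y :: real assume y: "y \<ge> 0"
    show "- (y^3) + \<tau> * y^2 + c * y \<le> \<bar>\<tau>\<bar> * Y^2 + \<bar>c\<bar> * Y"
    proof (cases "y \<le> Y")
      case True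
      have "\<tau> * y^2 \<le> \<bar>\<tau>\<bar> * Y^2"
        using True y by (meson abs_ge_self abs_ge_zero mult_mono order_trans power_mono zero_le_power2)
      moreover have "c * y \<le> \<bar>\<bar>c\<bar>\<bar> * Y"
        using True y by (metis abs_ge_self abs_ge_zero abs_idempotent mult_mono order_trans)
      moreover have "y^3 \<ge> 0" using y by simp
      ultimately show ?thesis by linarith
    next
      case False
      then have yY: "y \<ge> Y" "y \<ge> 1" using Y1 by auto
      have "\<tau> * y^2 \<le> \<bar>\<tau>\<bar> * y^2" by (simp add: mult_right_mono)
      moreover have "c * y \<le> \<bar>c\<bar> * y^2"
      proof -
        have "c * y \<le> \<bar>c\<bar> * y" using y by (simp add: mult_right_mono)
        also have "\<dots> \<le> \<bar>c\<bar> * y^2" using yY by (simp add: mult_left_mono power2_eq_square)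
        finally show ?thesis .
      qed
      moreover have "(\<bar>\<tau>\<bar> + \<bar>c\<bar>) * y^2 \<le> y * y^2"
        using yY unfolding Y_def by (intro mult_right_mono) auto
      ultimately have "- (y^3) + \<tau> * y^2 + c * y \<le> 0"
        by (simp add: power3_eq_cube power2_eq_square algebra_simps)
      also have "0 \<le> \<bar>\<tau>\<bar> * Y^2 + \<bar>c\<bar> * Y" using Y1 by simp
      finally show ?thesis .
    qed
  qed
qed

lemma EE_bound: "\<exists>M. \<forall>x. EE \<tau> s x \<le> M * exp (- (x^2) / 2)"
proof -
  obtain M where M: "\<And>y. y \<ge> 0 \<Longrightarrow> - (y^3) + \<tau> * y^2 + (s + 1/2) * y \<le> M"
    using poly_bound by blast
  show ?thesis
  proof (intro exI allI)
    fix x :: real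
    have "- (x ^ 6) + \<tau> * x ^ 4 + s * x ^ 2 = (- ((x^2)^3) + \<tau> * (x^2)^2 + (s + 1/2) * x^2) + (- (x^2)/2)"
      by (simp add: algebra_simps flip: power_mult)
    also have "\<dots> \<le> M + (- (x^2)/2)" using M[of "x^2"] by simp
    finally show "EE \<tau> s x \<le> exp M * exp (- (x^2) / 2)"
      unfolding EE_def by (simp flip: exp_add)
  qed
qed

lemma EE_meas[measurable]: "EE \<tau> t \<in> borel_measurable borel"
  unfolding EE_def[abs_def] by measurable

lemma EE_pos: "EE \<tau> t x > 0" by (simp add: EE_def)

lemma integrable_EE: "integrable lborel (EE \<tau> s)"
proof -
  obtain M where M: "\<And>x. EE \<tau> s x \<le> M * exp (- (x^2) / 2)" using EE_bound by blast
  have "integrable lborel (\<lambda>x. (M * sqrt (2*pi)) * std_normal_density x)"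
    by (intro integrable_mult_right integrable_normal_density) simp
  then show ?thesis
  proof (rule Bochner_Integration.integrable_bound)
    show "AE x in lborel. norm (EE \<tau> s x) \<le> norm (M * sqrt (2 * pi) * std_normal_density x)"
    proof (intro AE_I2)
      fix x
      have "norm (EE \<tau> s x) = EE \<tau> s x" using EE_pos[of \<tau> s x] by simp
      also have "\<dots> \<le> M * exp (- (x^2) / 2)" by (rule M)
      also have "\<dots> = M * sqrt (2 * pi) * std_normal_density x"
        unfolding std_normal_density_def by simp
      also have "\<dots> \<le> norm (M * sqrt (2 * pi) * std_normal_density x)" by simp
      finally show "norm (EE \<tau> s x) \<le> norm (M * sqrt (2 * pi) * std_normal_density x)" .
    qed
  qed simp
qed

lemma pow_EE_le: "x^(2*k) * EE \<tau> t x \<le> EE \<tau> (t + real k) x"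
proof -
  have "x^(2*k) = (x^2)^k" by (simp add: power_mult)
  also have "\<dots> \<le> exp (x^2) ^ k"
    by (intro power_mono) (use exp_ge_add_one_self[of "x^2"] in linarith, simp)
  also have "\<dots> = exp (real k * x^2)" by (simp add: exp_of_nat_mult)
  finally have "x^(2*k) * EE \<tau> t x \<le> exp (real k * x^2) * EE \<tau> t x"
    using EE_pos[of \<tau> t x] by (simp add: mult_right_mono)
  also have "\<dots> = EE \<tau> (t + real k) x" unfolding EE_def by (simp add: algebra_simps flip: exp_add)
  finally show ?thesis .
qed

lemma integrable_pow_EE: "integrable lborel (\<lambda>x. x^(2*k) * EE \<tau> t x)"
  using integrable_EE[of \<tau> "t + real k"]
proof (rule Bochner_Integration.integrable_bound)
  show "AE x in lborel. norm (x^(2*k) * EE \<tau> t x) \<le> norm (EE \<tau> (t + real k) x)"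
    using pow_EE_le EE_pos by (intro AE_I2) (simp add: abs_mult less_imp_le)
qed simp

lemma dc_at0:
  fixes F :: "real \<Rightarrow> real \<Rightarrow> real" and G w :: "real \<Rightarrow> real"
  assumes meas: "\<And>h. F h \<in> borel_measurable borel" and measG: "G \<in> borel_measurable borel"
    and w: "integrable lborel w"
    and lim: "\<And>x. ((\<lambda>h. F h x) \<longlongrightarrow> G x) (at 0)"
    and bound: "\<And>h x. h \<noteq> 0 \<Longrightarrow> \<bar>h\<bar> < 1 \<Longrightarrow> \<bar>F h x\<bar> \<le> w x"
  shows "((\<lambda>h. \<integral>x. F h x \<partial>lborel) \<longlongrightarrow> (\<integral>x. G x \<partial>lborel)) (at 0)"
proof -
  have "((\<lambda>h. \<integral>x. F h x \<partial>lborel) \<longlongrightarrow> (\<integral>x. G x \<partial>lborel)) (at 0 within {-1<..<1})"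
    unfolding tendsto_at_iff_sequentially
  proof (intro allI impI)
    fix X :: "nat \<Rightarrow> real" assume X: "\<forall>i. X i \<in> {-1<..<1} - {0}" "X \<longlonglongrightarrow> 0"
    have "(\<lambda>i. \<integral>x. F (X i) x \<partial>lborel) \<longlonglongrightarrow> (\<integral>x. G x \<partial>lborel)"
    proof (rule integral_dominated_convergence[where w=w])
      show "AE x in lborel. (\<lambda>i. F (X i) x) \<longlonglongrightarrow> G x"
      proof (intro AE_I2)
        fix x
        from lim[of x] have "((\<lambda>h. F h x) \<longlongrightarrow> G x) (at 0 within UNIV)" by simp
        then show "(\<lambda>i. F (X i) x) \<longlonglongrightarrow> G x"
          using X unfolding tendsto_at_iff_sequentially comp_def by auto
      qed
      show "\<And>i. AE x in lborel. norm (F (X i) x) \<le> w x"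
        using X bound by (auto simp: abs_less_iff)
    qed (use meas measG w in auto)
    then show "((\<lambda>h. \<integral>x. F h x \<partial>lborel) \<circ> X) \<longlonglongrightarrow> (\<integral>x. G x \<partial>lborel)"
      by (simp add: comp_def)
  qed
  moreover have "at (0::real) within {-1<..<1} = at 0" by (rule at_within_open) auto
  ultimately show ?thesis by simp
qed

lemma exp_minus_one_bound: fixes z :: real shows "\<bar>exp z - 1\<bar> \<le> \<bar>z\<bar> * exp \<bar>z\<bar>"
proof (cases "z \<ge> 0")
  case True
  have "1 - z \<le> exp (-z)" using exp_ge_add_one_self[of "-z"] by linarith
  then have a: "(1 - z) * exp z \<le> exp (-z) * exp z" by (rule mult_right_mono) simp
  have b: "exp (-z) * exp z = 1" by (simp add: exp_minus_inverse mult.commute)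
  have c: "(1 - z) * exp z = exp z - z * exp z" by (simp add: algebra_simps)
  have d: "exp z \<ge> 1" using True by simp
  have e: "\<bar>exp z - 1\<bar> = exp z - 1" "\<bar>z\<bar> = z" using d True by auto
  show ?thesis unfolding e using a b c by linarith
next
  case False
  have a: "1 + z \<le> exp z" using exp_ge_add_one_self[of z] by linarith
  have b: "exp z \<le> 1" using False by simp
  have c: "\<bar>z\<bar> \<le> \<bar>z\<bar> * exp \<bar>z\<bar>" using mult_left_mono[of 1 "exp \<bar>z\<bar>" "\<bar>z\<bar>"] by simp
  have e: "\<bar>exp z - 1\<bar> = 1 - exp z" "\<bar>z\<bar> = - z" using b False by auto
  show ?thesis using a c unfolding e by linarith
qed

definition gg :: "real \<Rightarrow> nat \<Rightarrow> real \<Rightarrow> real" where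
  "gg \<tau> k t = (\<integral>x. x^(2*k) * EE \<tau> t x \<partial>lborel)"

lemma EE_shift: "EE \<tau> (t + h) x = EE \<tau> t x * exp (h * x^2)"
  unfolding EE_def by (simp add: algebra_simps flip: exp_add)

lemma gg_deriv: "(gg \<tau> k has_real_derivative gg \<tau> (Suc k) t) (at t)"
  unfolding DERIV_def
proof -
  let ?F = "\<lambda>h x. (x^(2*k) * EE \<tau> (t+h) x - x^(2*k) * EE \<tau> t x) / h"
  have Fq: "?F h x = x^(2*k) * EE \<tau> t x * ((exp (h * x^2) - 1) / h)" for h x
    unfolding EE_shift by (simp add: algebra_simps diff_divide_distrib)
  have eq: "(gg \<tau> k (t+h) - gg \<tau> k t)/h = (\<integral>x. ?F h x \<partial>lborel)" for h
    unfolding gg_def by (simp add: integrable_pow_EE)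
  have LIM: "((\<lambda>h. \<integral>x. ?F h x \<partial>lborel) \<longlongrightarrow> (\<integral>x. x^(2*Suc k) * EE \<tau> t x \<partial>lborel)) (at 0)"
  proof (rule dc_at0[where w="\<lambda>x. x^(2*Suc k) * EE \<tau> (t+1) x"])
    show "integrable lborel (\<lambda>x. x^(2*Suc k) * EE \<tau> (t+1) x)" by (rule integrable_pow_EE)
  next
    fix x :: real
    have d: "((\<lambda>h. exp (h * x^2)) has_real_derivative x^2) (at 0)"
      by (auto intro!: derivative_eq_intros)
    have "((\<lambda>h. (exp (h * x^2) - 1) / h) \<longlongrightarrow> x^2) (at 0)"
      using d unfolding DERIV_def by simp
    then have L: "((\<lambda>h. x^(2*k) * EE \<tau> t x * ((exp (h * x^2) - 1) / h)) \<longlongrightarrow> x^(2*k) * EE \<tau> t x * x^2) (at 0)"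
      by (intro tendsto_mult_left)
    have R1: "(\<lambda>h. ?F h x) = (\<lambda>h. x^(2*k) * EE \<tau> t x * ((exp (h * x^2) - 1) / h))"
      apply (rule ext) unfolding EE_shift by (simp add: algebra_simps diff_divide_distrib)
    have R2: "x^(2*k) * EE \<tau> t x * x^2 = x^(2*Suc k) * EE \<tau> t x"
      by (simp add: power_add power2_eq_square algebra_simps)
    show "((\<lambda>h. ?F h x) \<longlongrightarrow> x^(2*Suc k) * EE \<tau> t x) (at 0)"
      unfolding R1 R2[symmetric] by (rule L)
  next
    fix h x :: real assume h: "h \<noteq> 0" "\<bar>h\<bar> < 1"
    have E0: "EE \<tau> t x > 0" by (rule EE_pos)
    have x2: "x^2 \<ge> 0" by simp
    have "\<bar>exp (h * x^2) - 1\<bar> \<le> \<bar>h * x^2\<bar> * exp \<bar>h * x^2\<bar>" by (rule exp_minus_one_bound)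
    also have "\<dots> = \<bar>h\<bar> * (x^2 * exp (\<bar>h\<bar> * x^2))" by (simp add: abs_mult)
    also have "\<dots> \<le> \<bar>h\<bar> * (x^2 * exp (x^2))"
    proof -
      have "\<bar>h\<bar> * x^2 \<le> x^2" using h x2 mult_right_mono[of "\<bar>h\<bar>" 1 "x^2"] by simp
      then have "exp (\<bar>h\<bar> * x^2) \<le> exp (x^2)" by simp
      then show ?thesis using x2 by (intro mult_left_mono) (auto intro: mult_left_mono)
    qed
    finally have b: "\<bar>exp (h * x^2) - 1\<bar> / \<bar>h\<bar> \<le> x^2 * exp (x^2)"
      using h by (simp add: divide_le_eq mult.commute)
    have "\<bar>?F h x\<bar> = \<bar>x^(2*k)\<bar> * \<bar>EE \<tau> t x\<bar> * (\<bar>exp (h * x^2) - 1\<bar> / \<bar>h\<bar>)"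
      unfolding Fq by (simp only: abs_mult abs_divide)
    also have "\<dots> = x^(2*k) * EE \<tau> t x * (\<bar>exp (h * x^2) - 1\<bar> / \<bar>h\<bar>)"
      using E0 by (simp add: power_mult)
    also have "\<dots> \<le> x^(2*k) * EE \<tau> t x * (x^2 * exp (x^2))"
      using b E0 by (intro mult_left_mono) (auto simp: power_mult)
    also have "\<dots> = x^(2*Suc k) * EE \<tau> (t+1) x"
      using EE_shift[of \<tau> t 1 x] by (simp add: power_add power2_eq_square algebra_simps)
    finally show "\<bar>?F h x\<bar> \<le> x^(2*Suc k) * EE \<tau> (t+1) x" .
  qed auto
  show "((\<lambda>h. (gg \<tau> k (t + h) - gg \<tau> k t) / h) \<longlongrightarrow> gg \<tau> (Suc k) t) (at 0)"
  proof -
    have "(\<lambda>h. (gg \<tau> k (t + h) - gg \<tau> k t) / h) = (\<lambda>h. \<integral>x. ?F h x \<partial>lborel)"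
      by (rule ext) (rule eq)
    then show ?thesis using LIM unfolding gg_def by simp
  qed
qed


lemma deriv_iter: "(deriv ^^ k) (gg \<tau> 0) = gg \<tau> k"
proof (induction k)
  case (Suc k)
  show ?case using gg_deriv by (auto simp: Suc intro!: ext DERIV_imp_deriv)
qed simp

lemma mu0_gg: "mu0 \<tau> = gg \<tau> 0"
  by (rule ext) (simp add: mu0_def gg_def EE_def)

lemma exp_half_lim: "((\<lambda>x::real. exp (- (x^2) / 2)) \<longlongrightarrow> 0) at_top"
proof -
  have xx: "filterlim (\<lambda>x::real. x * x) at_top at_top"
    by (rule filterlim_at_top_mult_at_top[OF filterlim_ident filterlim_ident])
  have "filterlim (\<lambda>x::real. (1/2) * (x * x)) at_top at_top"
    using filterlim_tendsto_pos_mult_at_top[OF tendsto_const[of "1/2::real"] _ xx] by simp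
  then have "filterlim (\<lambda>x::real. (x * x) / 2) at_top at_top" by simp
  then have "filterlim (\<lambda>x::real. - ((x * x) / 2)) at_bot at_top"
    by (simp add: filterlim_uminus_at_bot)
  then have "((\<lambda>x::real. exp (- ((x * x) / 2))) \<longlongrightarrow> 0) at_top"
    by (rule filterlim_compose[OF exp_at_bot])
  then show ?thesis by (simp add: power2_eq_square)
qed

lemma H_bound: "\<exists>M. \<forall>x. \<bar>x * EE \<tau> t x\<bar> \<le> M * exp (- (x^2) / 2)"
proof -
  obtain M where M: "\<And>x. EE \<tau> (t+1) x \<le> M * exp (- (x^2) / 2)" using EE_bound by blast
  show ?thesis
  proof (intro exI allI)
    fix x :: real
    have "\<bar>x\<bar> \<le> 1 + x^2"
    proof -
      have "0 \<le> (\<bar>x\<bar> - 1)^2" by simp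
      then have "2 * \<bar>x\<bar> \<le> 1 + x^2" by (simp add: power2_eq_square algebra_simps abs_mult_self_eq)
      moreover have "0 \<le> x^2" by simp
      ultimately show ?thesis by linarith
    qed
    also have "\<dots> \<le> exp (x^2)" by (rule exp_ge_add_one_self)
    finally have "\<bar>x * EE \<tau> t x\<bar> \<le> exp (x^2) * EE \<tau> t x"
      using EE_pos[of \<tau> t x] by (simp add: abs_mult mult_right_mono)
    also have "\<dots> = EE \<tau> (t+1) x" using EE_shift[of \<tau> t 1 x] by simp
    also have "\<dots> \<le> M * exp (- (x^2) / 2)" by (rule M)
    finally show "\<bar>x * EE \<tau> t x\<bar> \<le> M * exp (- (x^2) / 2)" .
  qed
qed

lemma H_lim_top: "((\<lambda>x. x * EE \<tau> t x) \<longlongrightarrow> 0) at_top"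
proof -
  obtain M where M: "\<And>x. \<bar>x * EE \<tau> t x\<bar> \<le> M * exp (- (x^2) / 2)" using H_bound by blast
  show ?thesis
  proof (rule Lim_null_comparison)
    show "\<forall>\<^sub>F x in at_top. norm (x * EE \<tau> t x) \<le> M * exp (- (x^2) / 2)" using M by simp
    show "((\<lambda>x. M * exp (- (x^2) / 2)) \<longlongrightarrow> 0) at_top"
      using tendsto_mult_left[OF exp_half_lim, of M] by simp
  qed
qed

lemma H_lim_bot: "((\<lambda>x. x * EE \<tau> t x) \<longlongrightarrow> 0) at_bot"
proof -
  obtain M where M: "\<And>x. \<bar>x * EE \<tau> t x\<bar> \<le> M * exp (- (x^2) / 2)" using H_bound by blast
  have "((\<lambda>x. M * exp (- (x^2) / 2)) \<longlongrightarrow> 0) at_bot"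
    unfolding filterlim_at_bot_mirror using tendsto_mult_left[OF exp_half_lim, of M] by simp
  then show ?thesis
    by (rule Lim_null_comparison[rotated]) (use M in simp)
qed

lemma H_deriv: "((\<lambda>x. x * EE \<tau> t x) has_real_derivative
   (EE \<tau> t x - 6 * (x^(2*3) * EE \<tau> t x) + 4 * \<tau> * (x^(2*2) * EE \<tau> t x) + 2 * t * (x^(2*1) * EE \<tau> t x))) (at x)"
  unfolding EE_def
  by (auto intro!: derivative_eq_intros simp: algebra_simps power_mult numeral_eq_Suc)

lemma ode: "gg \<tau> 3 t - 2/3 * \<tau> * gg \<tau> 2 t - 1/3 * t * gg \<tau> 1 t - 1/6 * gg \<tau> 0 t = 0"
proof -
  let ?f = "\<lambda>x. EE \<tau> t x - 6 * (x^(2*3) * EE \<tau> t x) + 4 * \<tau> * (x^(2*2) * EE \<tau> t x) + 2 * t * (x^(2*1) * EE \<tau> t x)"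
  have I0: "integrable lborel (EE \<tau> t)" by (rule integrable_EE)
  have I: "integrable lborel (\<lambda>x. x^(2*k) * EE \<tau> t x)" for k by (rule integrable_pow_EE)
  have intf: "integrable lborel ?f"
    using I0 I[of 3] I[of 2] I[of 1] by (intro Bochner_Integration.integrable_add Bochner_Integration.integrable_diff integrable_mult_right) auto
  have "(LBINT x=-\<infinity>..\<infinity>. ?f x) = 0 - 0"
  proof (rule interval_integral_FTC_integrable[where F="\<lambda>x. x * EE \<tau> t x"])
    show "- \<infinity> < (\<infinity>::ereal)" by simp
    show "((\<lambda>x. x * EE \<tau> t x) has_vector_derivative ?f x) (at x)" for x
      using H_deriv[of \<tau> t x] by (simp add: has_real_derivative_iff_has_vector_derivative)
    show "isCont ?f x" for x unfolding EE_def by (intro continuous_intros)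
    show "set_integrable lborel (einterval (- \<infinity>) \<infinity>) ?f"
      using intf by (simp add: set_integrable_def)
    show "(((\<lambda>x. x * EE \<tau> t x) \<circ> real_of_ereal) \<longlongrightarrow> 0) (at_right (- \<infinity>))"
      unfolding ereal_tendsto_simps1 by (rule H_lim_bot)
    show "(((\<lambda>x. x * EE \<tau> t x) \<circ> real_of_ereal) \<longlongrightarrow> 0) (at_left \<infinity>)"
      unfolding ereal_tendsto_simps1 by (rule H_lim_top)
  qed
  then have "(\<integral>x. ?f x \<partial>lborel) = 0"
    by (simp add: interval_lebesgue_integral_def set_lebesgue_integral_def)
  moreover have "(\<integral>x. ?f x \<partial>lborel) = gg \<tau> 0 t - 6 * gg \<tau> 3 t + 4 * \<tau> * gg \<tau> 2 t + 2 * t * gg \<tau> 1 t"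
    using I0 I[of 3] I[of 2] I[of 1] unfolding gg_def
    by (simp add: Bochner_Integration.integrable_add Bochner_Integration.integrable_diff integrable_mult_right)
  ultimately show ?thesis by (simp add: algebra_simps)
qed


lemma EE_even: "EE \<tau> t (-x) = EE \<tau> t x" by (simp add: EE_def)

lemma mu0_half: "mu0 \<tau> t = 2 * (LBINT x:{0<..}. EE \<tau> t x)"
proof -
  let ?P = "\<lambda>x::real. indicator {0<..} x * EE \<tau> t x"
  have IP: "integrable lborel ?P"
    using integrable_mult_indicator[of "{0<..}" lborel "EE \<tau> t"] integrable_EE[of \<tau> t] by simp
  have IP2: "integrable lborel (\<lambda>x. ?P (0 + (-1) * x))"
    using IP by (subst lborel_integrable_real_affine_iff) auto
  have "mu0 \<tau> t = (\<integral>x. EE \<tau> t x \<partial>lborel)" by (simp add: mu0_def EE_def)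
  also have "\<dots> = (\<integral>x. ?P x + ?P (0 + (-1) * x) \<partial>lborel)"
  proof (rule integral_cong_AE)
    show "AE x in lborel. EE \<tau> t x = ?P x + ?P (0 + (-1) * x)"
      using AE_lborel_singleton[of 0]
      by eventually_elim (auto simp: EE_even indicator_def)
  qed (use IP IP2 in auto)
  also have "\<dots> = (\<integral>x. ?P x \<partial>lborel) + (\<integral>x. ?P (0 + (-1) * x) \<partial>lborel)"
    by (rule Bochner_Integration.integral_add[OF IP IP2])
  also have "(\<integral>x. ?P (0 + (-1) * x) \<partial>lborel) = (\<integral>x. ?P x \<partial>lborel)"
    using lborel_integral_real_affine[of "-1" ?P 0] by simp
  also have "(\<integral>x. ?P x \<partial>lborel) = (LBINT x:{0<..}. EE \<tau> t x)"
    by (simp add: set_lebesgue_integral_def)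
  finally show ?thesis by simp
qed

lemma powr_sq: "x > 0 \<Longrightarrow> (x^2) powr (-1/2) * (2 * x) = (2::real)"
proof -
  assume x: "x > 0"
  have "(x^2) powr (-1/2) = inverse ((x^2) powr (1/2))"
    using powr_minus[of "x^2" "1/2"] by simp
  also have "(x^2) powr (1/2) = x" using x by (simp add: powr_half_sqrt)
  finally show ?thesis using x by simp
qed

lemma subst_part:
  "set_integrable lborel {0<..} (\<lambda>s. s powr (-1/2) * exp (- (s ^ 3) + \<tau> * s ^ 2 + t * s))
   \<and> (LBINT s:{0<..}. s powr (-1/2) * exp (- (s ^ 3) + \<tau> * s ^ 2 + t * s)) = 2 * (LBINT x:{0<..}. EE \<tau> t x)"
proof -
  define \<Phi> where "\<Phi> s = s powr (-1/2) * exp (- (s ^ 3) + \<tau> * s ^ 2 + t * s)" for s :: real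
  have key: "\<Phi> (x^2) * (2 * x) = 2 * EE \<tau> t x" if "x > 0" for x
  proof -
    have h1: "\<Phi> (x^2) = (x^2) powr (-1/2) * EE \<tau> t x"
      unfolding \<Phi>_def EE_def by (simp add: power_mult[symmetric])
    have "\<Phi> (x^2) * (2 * x) = ((x^2) powr (-1/2) * (2 * x)) * EE \<tau> t x"
      unfolding h1 by (simp only: mult_ac)
    then show ?thesis by (simp only: powr_sq[OF that])
  qed
  have int2: "set_integrable lborel {0<..} (\<lambda>x. 2 * EE \<tau> t x)"
    unfolding set_integrable_def
    using integrable_mult_indicator[of "{0<..}" lborel "\<lambda>x. 2 * EE \<tau> t x"] integrable_mult_right[OF integrable_EE, of 2 \<tau> t]
    by simp
  have intfg: "set_integrable lborel {0<..} (\<lambda>x. \<Phi> (x^2) * (2 * x))"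
    using int2 by (subst set_integrable_cong[where f'="\<lambda>x. 2 * EE \<tau> t x"]) (auto simp: key)
  have cont: "isCont \<Phi> (x^2)" if "x > 0" for x :: real
    unfolding \<Phi>_def using that by (auto intro!: continuous_intros)
  have nn: "0 \<le> \<Phi> y" for y unfolding \<Phi>_def by simp
  note sub = interval_integral_substitution_nonneg[where a="ereal 0" and b=\<infinity> and A="ereal 0" and B=\<infinity>
      and g="\<lambda>x. x^2" and g'="\<lambda>x. 2 * x" and f=\<Phi>]
  have A: "((ereal \<circ> (\<lambda>x. x^2) \<circ> real_of_ereal) \<longlongrightarrow> ereal 0) (at_right (ereal 0))"
    unfolding ereal_tendsto_simps1 ereal_tendsto_simps2
    by (intro tendsto_eq_intros) auto
  have B: "((ereal \<circ> (\<lambda>x::real. x^2) \<circ> real_of_ereal) \<longlongrightarrow> \<infinity>) (at_left \<infinity>)"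
    unfolding ereal_tendsto_simps1 ereal_tendsto_simps2
    by (intro filterlim_pow_at_top filterlim_ident) auto
  have conds: "set_integrable lborel (einterval (ereal 0) \<infinity>) \<Phi> \<and>
      (LBINT x=ereal 0..\<infinity>. \<Phi> x) = (LBINT x=ereal 0..\<infinity>. \<Phi> (x^2) * (2 * x))"
  proof (rule conjI; rule sub)
  qed (auto simp: A B intfg cont nn intro!: derivative_eq_intros continuous_intros)
  have "(LBINT x:{0<..}. \<Phi> (x^2) * (2 * x)) = (LBINT x:{0<..}. 2 * EE \<tau> t x)"
    by (rule set_lebesgue_integral_cong) (auto simp: key)
  then have "(LBINT x=ereal 0..\<infinity>. \<Phi> (x^2) * (2 * x)) = 2 * (LBINT x:{0<..}. EE \<tau> t x)"
    by (simp add: interval_lebesgue_integral_def)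
  then show ?thesis using conds unfolding \<Phi>_def by (simp add: interval_lebesgue_integral_def)
qed

theorem lemma5p1:
  fixes \<tau> :: real
  shows "integrable lborel (\<lambda>x. exp (- (x ^ 6) + \<tau> * x ^ 4 + t * x ^ 2))
    \<and> set_integrable lborel {0<..} (\<lambda>s. s powr (-1/2) * exp (- (s ^ 3) + \<tau> * s ^ 2 + t * s))
    \<and> mu0 \<tau> t = (LBINT s:{0<..}. s powr (-1/2) * exp (- (s ^ 3) + \<tau> * s ^ 2 + t * s))
    \<and> (\<forall>k<3. \<forall>u. ((deriv ^^ k) (mu0 \<tau>) has_real_derivative (deriv ^^ Suc k) (mu0 \<tau>) u) (at u))
    \<and> (\<forall>u. (deriv ^^ 3) (mu0 \<tau>) u - 2/3 * \<tau> * (deriv ^^ 2) (mu0 \<tau>) u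
            - 1/3 * u * deriv (mu0 \<tau>) u - 1/6 * mu0 \<tau> u = 0)"
proof (intro conjI allI impI)
  show "integrable lborel (\<lambda>x. exp (- (x ^ 6) + \<tau> * x ^ 4 + t * x ^ 2))"
    using integrable_EE[of \<tau> t] unfolding EE_def .
  show "set_integrable lborel {0<..} (\<lambda>s. s powr (-1/2) * exp (- (s ^ 3) + \<tau> * s ^ 2 + t * s))"
    using subst_part by blast
  show "mu0 \<tau> t = (LBINT s:{0<..}. s powr (-1/2) * exp (- (s ^ 3) + \<tau> * s ^ 2 + t * s))"
    using subst_part[of \<tau> t] mu0_half[of \<tau> t] by simp
  fix k u
  show "k < 3 \<Longrightarrow> ((deriv ^^ k) (mu0 \<tau>) has_real_derivative (deriv ^^ Suc k) (mu0 \<tau>) u) (at u)"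
    unfolding mu0_gg deriv_iter by (rule gg_deriv)
next
  fix u
  have "deriv (mu0 \<tau>) = (deriv ^^ 1) (mu0 \<tau>)" by simp
  then show "(deriv ^^ 3) (mu0 \<tau>) u - 2/3 * \<tau> * (deriv ^^ 2) (mu0 \<tau>) u
            - 1/3 * u * deriv (mu0 \<tau>) u - 1/6 * mu0 \<tau> u = 0"
    unfolding mu0_gg deriv_iter using ode[of \<tau> u] by (simp add: deriv_iter)
qed

end
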